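(* Let \(G\) be a connected split graph and \(T\) a spanning tree of \(G\). Then \(T\) is the \(\mathcal{F}\)-tree of some BFS ordering of \(G\) if and only if \(T\) is the \(\mathcal{F}\)-tree of some MNS ordering of \(G\). The same equivalence holds with MNS replaced by MCS, by LBFS, and by LDFS, respectively.
   Context: A split graph is a graph whose vertex set can be partitioned into a clique and an independent set. A BFS ordering is a vertex ordering produced by breadth first search (vertices are visited from a start vertex using a queue of discovered but unvisited vertices). With \(n=|V|\): an LBFS ordering is produced by starting with label \((n)\) on a start vertex \(s\), empty labels elsewhere, and for \(i=1,\dots,n\) picking an unnumbered vertex of lexicographically largest label as \(v_i\) and appending \(n-i\) to the labels of its unnumbered neighbors. An LDFS ordering is produced similarly with \(s\) labelled \((0)\), others empty, and prepending \(i\) instead of appending \(n-i\). An MCS ordering is produced by repeatedly choosing an unnumbered vertex with the most numbered neighbors. An MNS ordering is produced with set labels: all labels \(\emptyset\), \(s\) gets \(\{n+1\}\); repeatedly pick an unnumbered vertex whose label is inclusion-maximal, make it \(v_i\), and add \(i\) to the labels of its unnumbered neighbors. Ties are broken arbitrarily in all searches. The \(\mathcal{F}\)-tree of an ordering \(\sigma=(v_1,\dots,v_n)\) is the tree on \(V\) with, for each \(v\neq v_1\), an edge from \(v\) to its leftmost neighbor in \(\sigma\). *)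

theory Defs
  imports Main
begin

definition graph :: "'a set \<Rightarrow> 'a set set \<Rightarrow> bool" where
  "graph V E \<longleftrightarrow> finite V \<and> (\<forall>e\<in>E. \<exists>u v. u \<noteq> v \<and> u \<in> V \<and> v \<in> V \<and> e = {u, v})"

definition adj :: "'a set set \<Rightarrow> 'a \<Rightarrow> 'a \<Rightarrow> bool" where
  "adj E u v \<longleftrightarrow> {u, v} \<in> E"

definition is_walk :: "'a set \<Rightarrow> 'a set set \<Rightarrow> 'a list \<Rightarrow> bool" where
  "is_walk V E p \<longleftrightarrow> p \<noteq> [] \<and> set p \<subseteq> V \<and> (\<forall>i. i + 1 < length p \<longrightarrow> adj E (p ! i) (p ! (i + 1)))"

definition connected_graph :: "'a set \<Rightarrow> 'a set set \<Rightarrow> bool" where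
  "connected_graph V E \<longleftrightarrow> graph V E \<and> V \<noteq> {} \<and>
     (\<forall>u\<in>V. \<forall>v\<in>V. \<exists>p. is_walk V E p \<and> hd p = u \<and> last p = v)"

definition is_cycle :: "'a set \<Rightarrow> 'a set set \<Rightarrow> 'a list \<Rightarrow> bool" where
  "is_cycle V E c \<longleftrightarrow> is_walk V E c \<and> distinct c \<and> length c \<ge> 3 \<and> adj E (last c) (hd c)"

definition is_tree :: "'a set \<Rightarrow> 'a set set \<Rightarrow> bool" where
  "is_tree V T \<longleftrightarrow> connected_graph V T \<and> (\<nexists>c. is_cycle V T c)"

definition spanning_tree :: "'a set \<Rightarrow> 'a set set \<Rightarrow> 'a set set \<Rightarrow> bool" where
  "spanning_tree V E T \<longleftrightarrow> T \<subseteq> E \<and> is_tree V T"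

definition clique :: "'a set set \<Rightarrow> 'a set \<Rightarrow> bool" where
  "clique E K \<longleftrightarrow> (\<forall>u\<in>K. \<forall>v\<in>K. u \<noteq> v \<longrightarrow> adj E u v)"

definition independent :: "'a set set \<Rightarrow> 'a set \<Rightarrow> bool" where
  "independent E I \<longleftrightarrow> (\<forall>u\<in>I. \<forall>v\<in>I. \<not> adj E u v)"

definition split_graph :: "'a set \<Rightarrow> 'a set set \<Rightarrow> bool" where
  "split_graph V E \<longleftrightarrow> graph V E \<and>
     (\<exists>K I. K \<union> I = V \<and> K \<inter> I = {} \<and> clique E K \<and> independent E I)"

text \<open>Vertex orderings: lists enumerating V without repetition; sigma ! (i-1) is v_i.\<close>

definition ordering :: "'a set \<Rightarrow> 'a list \<Rightarrow> bool" where
  "ordering V \<sigma> \<longleftrightarrow> distinct \<sigma> \<and> set \<sigma> = V"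

text \<open>BFS: executions with a queue of discovered but unvisited vertices.
  State (visited list, queue).\<close>

inductive bfs_run :: "'a set \<Rightarrow> 'a set set \<Rightarrow> 'a list \<Rightarrow> 'a list \<Rightarrow> bool"
  for V E where
  start: "s \<in> V \<Longrightarrow> bfs_run V E [] [s]"
| step: "bfs_run V E \<sigma> (v # Q) \<Longrightarrow> distinct N \<Longrightarrow>
     set N = {w \<in> V. adj E v w \<and> w \<notin> set \<sigma> \<and> w \<notin> set (v # Q)} \<Longrightarrow>
     bfs_run V E (\<sigma> @ [v]) (Q @ N)"

definition bfs_ordering :: "'a set \<Rightarrow> 'a set set \<Rightarrow> 'a list \<Rightarrow> bool" where
  "bfs_ordering V E \<sigma> \<longleftrightarrow> ordering V \<sigma> \<and> bfs_run V E \<sigma> []"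

text \<open>Generic label-based search: v_i must be an unnumbered vertex such that no
  unnumbered vertex is strictly better, where "better u w p" means that u is
  strictly preferred to w after the prefix p = (v_1, ..., v_(i-1)) is numbered.\<close>

definition search_ordering ::
  "'a set \<Rightarrow> ('a list \<Rightarrow> 'a \<Rightarrow> 'a \<Rightarrow> bool) \<Rightarrow> 'a list \<Rightarrow> bool" where
  "search_ordering V better \<sigma> \<longleftrightarrow> ordering V \<sigma> \<and>
     (\<forall>i < length \<sigma>. \<forall>u \<in> V - set (take i \<sigma>). \<not> better (take i \<sigma>) u (\<sigma> ! i))"

definition lex_less :: "nat list \<Rightarrow> nat list \<Rightarrow> bool" where
  "lex_less xs ys \<longleftrightarrow> (xs, ys) \<in> lexord {(a, b). a < b}"

definition lbfs_label :: "'a set set \<Rightarrow> nat \<Rightarrow> 'a \<Rightarrow> 'a list \<Rightarrow> 'a \<Rightarrow> nat list" where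
  "lbfs_label E n s p u =
     (if u = s then [n] else []) @ [n - (j + 1). j \<leftarrow> [0..<length p], adj E (p ! j) u]"

definition lbfs_ordering :: "'a set \<Rightarrow> 'a set set \<Rightarrow> 'a list \<Rightarrow> bool" where
  "lbfs_ordering V E \<sigma> \<longleftrightarrow> (\<exists>s\<in>V. search_ordering V
     (\<lambda>p u w. lex_less (lbfs_label E (card V) s p w) (lbfs_label E (card V) s p u)) \<sigma>)"

definition ldfs_label :: "'a set set \<Rightarrow> 'a \<Rightarrow> 'a list \<Rightarrow> 'a \<Rightarrow> nat list" where
  "ldfs_label E s p u =
     [j + 1. j \<leftarrow> rev [0..<length p], adj E (p ! j) u] @ (if u = s then [0] else [])"

definition ldfs_ordering :: "'a set \<Rightarrow> 'a set set \<Rightarrow> 'a list \<Rightarrow> bool" where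
  "ldfs_ordering V E \<sigma> \<longleftrightarrow> (\<exists>s\<in>V. search_ordering V
     (\<lambda>p u w. lex_less (ldfs_label E s p w) (ldfs_label E s p u)) \<sigma>)"

definition mcs_count :: "'a set set \<Rightarrow> 'a list \<Rightarrow> 'a \<Rightarrow> nat" where
  "mcs_count E p u = card {j. j < length p \<and> adj E (p ! j) u}"

definition mcs_ordering :: "'a set \<Rightarrow> 'a set set \<Rightarrow> 'a list \<Rightarrow> bool" where
  "mcs_ordering V E \<sigma> \<longleftrightarrow> search_ordering V
     (\<lambda>p u w. mcs_count E p w < mcs_count E p u) \<sigma>"

definition mns_label :: "'a set set \<Rightarrow> nat \<Rightarrow> 'a \<Rightarrow> 'a list \<Rightarrow> 'a \<Rightarrow> nat set" where
  "mns_label E n s p u =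
     (if u = s then {n + 1} else {}) \<union> {j + 1 | j. j < length p \<and> adj E (p ! j) u}"

definition mns_ordering :: "'a set \<Rightarrow> 'a set set \<Rightarrow> 'a list \<Rightarrow> bool" where
  "mns_ordering V E \<sigma> \<longleftrightarrow> (\<exists>s\<in>V. search_ordering V
     (\<lambda>p u w. mns_label E (card V) s p w \<subset> mns_label E (card V) s p u) \<sigma>)"

definition F_tree :: "'a set set \<Rightarrow> 'a list \<Rightarrow> 'a set set" where
  "F_tree E \<sigma> = {{\<sigma> ! i, \<sigma> ! (LEAST j. j < length \<sigma> \<and> adj E (\<sigma> ! j) (\<sigma> ! i))} | i.
                   0 < i \<and> i < length \<sigma>}"

end

theory Submission
  imports Defs
begin



lemma lc_map_filter: "[f j. j \<leftarrow> xs, P j] = map f (filter P xs)"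
  by (induction xs) auto

lemma lex_not_less_dom:
  assumes "sorted_wrt (\<lambda>a b. f b < f a) xs" "\<forall>j\<in>set xs. A j \<longrightarrow> B j"
  shows "\<not> lex_less (map f (filter B xs)) (map f (filter A xs))"
  using assms
proof (induction xs)
  case Nil
  then show ?case by (simp add: lex_less_def)
next
  case (Cons x xs)
  then have IH: "\<not> lex_less (map f (filter B xs)) (map f (filter A xs))" by simp
  have lt: "\<forall>y\<in>set xs. f y < f x" using Cons.prems by simp
  show ?case
  proof (cases "A x")
    case True
    then have "B x" using Cons.prems by simp
    then show ?thesis using True IH by (simp add: lex_less_def lexord_cons_cons)
  next
    case False
    show ?thesis
    proof (cases "B x")
      case True
      show ?thesis
      proof (cases "filter A xs")
        case Nil
        then show ?thesis using False True by (simp add: lex_less_def)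
      next
        case (Cons z zs)
        then have "z \<in> set (filter A xs)" by simp
        then have "z \<in> set xs" by simp
        then have "f z < f x" using lt by simp
        then show ?thesis using False True Cons by (simp add: lex_less_def lexord_cons_cons)
      qed
    next
      case False2: False
      then show ?thesis using False IH by simp
    qed
  qed
qed

lemma lex_less_sdom:
  assumes "sorted_wrt (\<lambda>a b. f b < f a) xs" "\<forall>j\<in>set xs. A j \<longrightarrow> B j"
    "\<exists>j\<in>set xs. B j \<and> \<not> A j"
  shows "lex_less (map f (filter A xs)) (map f (filter B xs))"
  using assms
proof (induction xs)
  case Nil
  then show ?case by simp
next
  case (Cons x xs)
  have lt: "\<forall>y\<in>set xs. f y < f x" using Cons.prems by simp
  show ?case
  proof (cases "A x")
    case True
    then have "B x" using Cons.prems by simp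
    have "\<exists>j\<in>set xs. B j \<and> \<not> A j" using Cons.prems True by auto
    then have "lex_less (map f (filter A xs)) (map f (filter B xs))"
      using Cons by simp
    then show ?thesis using True \<open>B x\<close> by (simp add: lex_less_def lexord_cons_cons)
  next
    case False
    show ?thesis
    proof (cases "B x")
      case True
      show ?thesis
      proof (cases "filter A xs")
        case Nil
        then show ?thesis using False True by (simp add: lex_less_def)
      next
        case (Cons z zs)
        then have "z \<in> set (filter A xs)" by simp
        then have "z \<in> set xs" by simp
        then have "f z < f x" using lt by simp
        then show ?thesis using False True Cons by (simp add: lex_less_def lexord_cons_cons)
      qed
    next
      case False2: False
      have "\<exists>j\<in>set xs. B j \<and> \<not> A j" using Cons.prems False2 by auto
      then show ?thesis using False False2 Cons by simp
    qed
  qed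
qed

lemma lex_less_irrefl: "\<not> lex_less xs xs"
  unfolding lex_less_def by (rule lexord_irreflexive) simp

lemma lex_less_trans: "lex_less xs ys \<Longrightarrow> lex_less ys zs \<Longrightarrow> lex_less xs zs"
  unfolding lex_less_def by (rule lexord_trans) (auto simp: trans_def)

lemma least_hd_filter:
  "\<exists>j<length xs. P (xs ! j) \<Longrightarrow> xs ! (LEAST j. j < length xs \<and> P (xs ! j)) = hd (filter P xs)"
proof (induction xs)
  case Nil
  then show ?case by simp
next
  case (Cons x xs)
  show ?case
  proof (cases "P x")
    case True
    have "(LEAST j. j < length (x # xs) \<and> P ((x # xs) ! j)) = 0"
      by (rule Least_equality) (use True in auto)
    then show ?thesis using True by simp
  next
    case False
    obtain j where j: "j < length (x#xs)" "P ((x#xs)!j)" using Cons.prems by blast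
    have "(LEAST j. j < length (x # xs) \<and> P ((x # xs) ! j))
        = Suc (LEAST j. Suc j < length (x # xs) \<and> P ((x # xs) ! Suc j))"
      by (rule Least_Suc[where P="\<lambda>j. j < length (x#xs) \<and> P ((x#xs)!j)", OF conjI[OF j]]) (use False in simp)
    moreover have "\<exists>j<length xs. P (xs ! j)"
      using j False by (cases j) auto
    ultimately show ?thesis using Cons.IH False by simp
  qed
qed

lemma hd_filter_restrict:
  "\<exists>x\<in>set xs. P x \<Longrightarrow> C (hd (filter P xs)) \<Longrightarrow> hd (filter P xs) = hd (filter P (filter C xs))"
  by (induction xs) (auto, blast+)

lemma finite_max_rel:
  assumes "finite S" "S \<noteq> {}" "\<And>x. \<not> R x x" "\<And>x y z. R x y \<Longrightarrow> R y z \<Longrightarrow> R x z"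
  shows "\<exists>m\<in>S. \<forall>u\<in>S. \<not> R m u"
  using assms(1,2)
proof (induction S rule: finite_ne_induct)
  case (singleton x)
  then show ?case using assms(3) by auto
next
  case (insert x S)
  then obtain m where m: "m \<in> S" "\<forall>u\<in>S. \<not> R m u" by blast
  show ?case
  proof (cases "R m x")
    case True
    then have "\<forall>u\<in>insert x S. \<not> R x u" using m assms(3,4) by blast
    then show ?thesis by blast
  next
    case False
    then show ?thesis using m by blast
  qed
qed

lemma search_extend:
  assumes fin: "finite V"
    and irr: "\<And>p u. \<not> B p u u"
    and tr: "\<And>p u v w. B p u v \<Longrightarrow> B p v w \<Longrightarrow> B p u w"
  shows "distinct P \<Longrightarrow> set P \<subseteq> V \<Longrightarrow>
     (\<forall>i<length P. \<forall>u\<in>V - set (take i P). \<not> B (take i P) u (P ! i)) \<Longrightarrow>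
     \<exists>ys. search_ordering V B (P @ ys)"
proof (induction "card (V - set P)" arbitrary: P rule: less_induct)
  case less
  show ?case
  proof (cases "V - set P = {}")
    case True
    then have "search_ordering V B (P @ [])"
      using less.prems unfolding search_ordering_def ordering_def by auto
    then show ?thesis by blast
  next
    case False
    obtain m where m: "m \<in> V - set P" "\<forall>u\<in>V - set P. \<not> B P u m"
      using finite_max_rel[of "V - set P" "\<lambda>x y. B P y x"] False fin irr tr by blast
    let ?P = "P @ [m]"
    have e: "V - set ?P = (V - set P) - {m}" by auto
    have c: "card (V - set ?P) < card (V - set P)"
      unfolding e using m fin by (intro card_Diff1_less) auto
    have v: "\<forall>i<length ?P. \<forall>u\<in>V - set (take i ?P). \<not> B (take i ?P) u (?P ! i)"
    proof (intro allI impI ballI)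
      fix i u assume i: "i < length ?P" and u: "u \<in> V - set (take i ?P)"
      show "\<not> B (take i ?P) u (?P ! i)"
      proof (cases "i < length P")
        case True
        then show ?thesis using less.prems(3) u by (auto simp: nth_append)
      next
        case False
        then have "i = length P" using i by simp
        then show ?thesis using m u by (auto simp: nth_append)
      qed
    qed
    obtain ys where "search_ordering V B (?P @ ys)"
      using less.hyps[OF c] less.prems m v by auto
    then show ?thesis by (metis append_Cons append_assoc self_append_conv2)
  qed
qed




locale gr =
  fixes V :: "'a set" and E :: "'a set set"
  assumes conn: "connected_graph V E"
begin

lemma graph: "graph V E" using conn unfolding connected_graph_def by simp
lemma fin: "finite V" using graph unfolding graph_def by simp
lemma nonempty: "V \<noteq> {}" using conn unfolding connected_graph_def by simp

lemma adj_sym: "adj E u v \<longleftrightarrow> adj E v u"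
  unfolding adj_def by (simp add: insert_commute)

lemma adj_irr: "\<not> adj E u u"
proof
  assume "adj E u u"
  then have "{u} \<in> E" unfolding adj_def by simp
  then obtain a b where "a \<noteq> b" "{u} = {a, b}" using graph unfolding graph_def by blast
  then show False by (metis insertCI singletonD)
qed

lemma adj_V: "adj E u v \<Longrightarrow> u \<in> V \<and> v \<in> V"
proof -
  assume "adj E u v"
  then have "{u, v} \<in> E" unfolding adj_def by simp
  then obtain a b where "a \<in> V" "b \<in> V" "{u, v} = {a, b}" using graph unfolding graph_def by blast
  then show ?thesis by (metis doubleton_eq_iff)
qed

lemma has_nbr: "u \<in> V \<Longrightarrow> v \<in> V \<Longrightarrow> u \<noteq> v \<Longrightarrow> \<exists>w. adj E u w"
proof -
  assume u: "u \<in> V" and v: "v \<in> V" and ne: "u \<noteq> v"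
  obtain p where p: "is_walk V E p" "hd p = u" "last p = v"
    using conn u v unfolding connected_graph_def by blast
  have "p \<noteq> []" using p unfolding is_walk_def by simp
  have "length p \<noteq> 1"
  proof
    assume "length p = 1"
    then obtain x where "p = [x]" by (metis One_nat_def length_0_conv length_Suc_conv)
    then show False using p ne by simp
  qed
  then have "0 + 1 < length p" using \<open>p \<noteq> []\<close> by (cases p) auto
  then have "adj E (p ! 0) (p ! 1)" using p unfolding is_walk_def by auto
  then show ?thesis using p \<open>p \<noteq> []\<close> by (metis hd_conv_nth)
qed

lemma closed_all:
  assumes x: "x \<in> S" and S: "S \<subseteq> V" and cl: "\<And>a b. a \<in> S \<Longrightarrow> adj E a b \<Longrightarrow> b \<in> S"
  shows "S = V"
proof
  show "V \<subseteq> S"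
  proof
    fix v assume v: "v \<in> V"
    obtain p where p: "is_walk V E p" "hd p = x" "last p = v"
      using conn x S v unfolding connected_graph_def by blast
    have ne: "p \<noteq> []" using p unfolding is_walk_def by simp
    have "\<forall>i<length p. p ! i \<in> S"
    proof (intro allI impI)
      fix i assume "i < length p"
      then show "p ! i \<in> S"
      proof (induction i)
        case 0
        then show ?case using p x ne by (simp add: hd_conv_nth)
      next
        case (Suc i)
        then have "adj E (p ! i) (p ! (i + 1))" using p unfolding is_walk_def by auto
        then show ?case using Suc cl by simp
      qed
    qed
    moreover have "length p - 1 < length p" using ne by simp
    ultimately have "p ! (length p - 1) \<in> S" by blast
    then show "v \<in> S" using p ne by (simp add: last_conv_nth)
  qed
qed (use S in simp)

section \<open>BFS\<close>

lemma bfs_inv1: "bfs_run V E \<sigma> Q \<Longrightarrow> distinct (\<sigma> @ Q) \<and> set (\<sigma> @ Q) \<subseteq> V \<and> \<sigma> @ Q \<noteq> []"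
proof (induction rule: bfs_run.induct)
  case (start s)
  then show ?case by simp
next
  case (step \<sigma> v Q N)
  then show ?case by auto
qed

lemma bfs_inv2: "bfs_run V E \<sigma> Q \<Longrightarrow> \<forall>x\<in>set \<sigma>. \<forall>w. adj E x w \<longrightarrow> w \<in> set (\<sigma> @ Q)"
proof (induction rule: bfs_run.induct)
  case (start s)
  then show ?case by simp
next
  case (step \<sigma> v Q N)
  show ?case
  proof (intro ballI allI impI)
    fix x w assume x: "x \<in> set (\<sigma> @ [v])" and a: "adj E x w"
    show "w \<in> set ((\<sigma> @ [v]) @ Q @ N)"
    proof (cases "x \<in> set \<sigma>")
      case True
      then show ?thesis using step.IH a by auto
    next
      case False
      then have "x = v" using x by simp
      then show ?thesis using step.hyps(3) a adj_V by auto
    qed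
  qed
qed

lemma bfs_empty: "bfs_run V E [] Q \<Longrightarrow> \<exists>s\<in>V. Q = [s]"
  by (cases rule: bfs_run.cases) auto

lemma bfs_shape: "bfs_run V E \<sigma> Q \<Longrightarrow> \<sigma> \<noteq> [] \<Longrightarrow>
   \<exists>N1 rest. \<sigma> @ Q = hd \<sigma> # N1 @ rest \<and> set N1 = {w\<in>V. adj E (hd \<sigma>) w}"
proof (induction rule: bfs_run.induct)
  case (start s)
  then show ?case by simp
next
  case (step \<sigma> v Q N)
  show ?case
  proof (cases "\<sigma> = []")
    case True
    then obtain s where "v # Q = [s]" using bfs_empty step.hyps(1) by blast
    then have "Q = []" by simp
    have "set N = {w\<in>V. adj E v w}" using step.hyps(3) True \<open>Q = []\<close> adj_irr by auto
    then show ?thesis using True \<open>Q = []\<close> by auto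
  next
    case False
    then obtain N1 rest where "\<sigma> @ v # Q = hd \<sigma> # N1 @ rest" "set N1 = {w\<in>V. adj E (hd \<sigma>) w}"
      using step.IH by blast
    then show ?thesis using False
      by (intro exI[of _ N1] exI[of _ "rest @ N"]) auto
  qed
qed

lemma bfs_complete: "bfs_run V E \<sigma> Q \<Longrightarrow> \<exists>ys. bfs_run V E (\<sigma> @ Q @ ys) []"
proof (induction "card V - length \<sigma>" arbitrary: \<sigma> Q rule: less_induct)
  case less
  show ?case
  proof (cases Q)
    case Nil
    then show ?thesis using less.prems by (intro exI[of _ "[]"]) simp
  next
    case (Cons v Q')
    define S where "S = {w \<in> V. adj E v w \<and> w \<notin> set \<sigma> \<and> w \<notin> set (v # Q')}"
    have "finite S" unfolding S_def using fin by simp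
    then obtain N where N: "distinct N" "set N = S" using finite_distinct_list by blast
    have r: "bfs_run V E (\<sigma> @ [v]) (Q' @ N)"
      using bfs_run.step[of V E \<sigma> v Q' N] less.prems Cons N S_def by simp
    have inv: "distinct (\<sigma> @ [v]) \<and> set (\<sigma> @ [v]) \<subseteq> V"
      using bfs_inv1[OF less.prems] Cons by auto
    then have "length (\<sigma> @ [v]) \<le> card V"
      by (metis distinct_card card_mono fin)
    then have "card V - length (\<sigma> @ [v]) < card V - length \<sigma>" by simp
    then obtain ys where "bfs_run V E ((\<sigma> @ [v]) @ (Q' @ N) @ ys) []"
      using less.hyps r by blast
    then show ?thesis using Cons by (intro exI[of _ "N @ ys"]) simp
  qed
qed

lemma bfs_final: "bfs_run V E \<sigma> [] \<Longrightarrow> bfs_ordering V E \<sigma>"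
proof -
  assume r: "bfs_run V E \<sigma> []"
  have i1: "distinct \<sigma>" "set \<sigma> \<subseteq> V" "\<sigma> \<noteq> []" using bfs_inv1[OF r] by auto
  have cl: "\<And>a b. a \<in> set \<sigma> \<Longrightarrow> adj E a b \<Longrightarrow> b \<in> set \<sigma>" using bfs_inv2[OF r] by auto
  have "set \<sigma> = V"
    by (rule closed_all[of "hd \<sigma>"]) (use i1 cl in auto)
  then show ?thesis unfolding bfs_ordering_def ordering_def using i1 r by simp
qed

end



context gr begin

lemma ord_ne: "ordering V \<sigma> \<Longrightarrow> \<sigma> \<noteq> []"
  using nonempty unfolding ordering_def by auto

lemma nbr_in: "ordering V \<sigma> \<Longrightarrow> v \<in> V \<Longrightarrow> v \<noteq> hd \<sigma> \<Longrightarrow> \<exists>x\<in>set \<sigma>. adj E x v"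
proof -
  assume o: "ordering V \<sigma>" and v: "v \<in> V" "v \<noteq> hd \<sigma>"
  have "hd \<sigma> \<in> V" using o ord_ne[OF o] unfolding ordering_def by auto
  then obtain w where "adj E v w" using has_nbr v by blast
  then show ?thesis using o adj_V adj_sym unfolding ordering_def by blast
qed

lemma F_tree_alt:
  assumes o: "ordering V \<sigma>"
  shows "F_tree E \<sigma> = (\<lambda>v. {v, hd (filter (\<lambda>x. adj E x v) \<sigma>)}) ` (V - {hd \<sigma>})"
proof -
  have ne: "\<sigma> \<noteq> []" using ord_ne[OF o] .
  have d: "distinct \<sigma>" and sV: "set \<sigma> = V" using o unfolding ordering_def by auto
  have par: "\<sigma> ! (LEAST j. j < length \<sigma> \<and> adj E (\<sigma> ! j) v) = hd (filter (\<lambda>x. adj E x v) \<sigma>)"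
    if pv: "v \<in> V" "v \<noteq> hd \<sigma>" for v
  proof -
    obtain x where "x \<in> set \<sigma>" "adj E x v" using nbr_in[OF o pv] by blast
    then have "\<exists>j<length \<sigma>. adj E (\<sigma> ! j) v" by (metis in_set_conv_nth)
    then show ?thesis by (rule least_hd_filter)
  qed
  show ?thesis
  proof
    show "F_tree E \<sigma> \<subseteq> (\<lambda>v. {v, hd (filter (\<lambda>x. adj E x v) \<sigma>)}) ` (V - {hd \<sigma>})"
    proof
      fix e assume "e \<in> F_tree E \<sigma>"
      then obtain i where i: "0 < i" "i < length \<sigma>"
        and e: "e = {\<sigma> ! i, \<sigma> ! (LEAST j. j < length \<sigma> \<and> adj E (\<sigma> ! j) (\<sigma> ! i))}"
        unfolding F_tree_def by blast
      have "\<sigma> ! i \<in> V" using i sV by auto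
      moreover have "\<sigma> ! i \<noteq> hd \<sigma>" using i d ne by (simp add: hd_conv_nth nth_eq_iff_index_eq)
      ultimately show "e \<in> (\<lambda>v. {v, hd (filter (\<lambda>x. adj E x v) \<sigma>)}) ` (V - {hd \<sigma>})"
        using e par by auto
    qed
  next
    show "(\<lambda>v. {v, hd (filter (\<lambda>x. adj E x v) \<sigma>)}) ` (V - {hd \<sigma>}) \<subseteq> F_tree E \<sigma>"
    proof
      fix e assume "e \<in> (\<lambda>v. {v, hd (filter (\<lambda>x. adj E x v) \<sigma>)}) ` (V - {hd \<sigma>})"
      then obtain v where v: "v \<in> V" "v \<noteq> hd \<sigma>" and e: "e = {v, hd (filter (\<lambda>x. adj E x v) \<sigma>)}"
        by blast
      obtain i where i: "i < length \<sigma>" "\<sigma> ! i = v" using v sV by (metis in_set_conv_nth)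
      have "i \<noteq> 0"
      proof
        assume "i = 0" then show False using i v ne by (simp add: hd_conv_nth)
      qed
      then have "0 < i" by simp
      then have "0 < i" by simp
      then show "e \<in> F_tree E \<sigma>" unfolding F_tree_def using i e par[OF v] by auto
    qed
  qed
qed

end

locale sg = gr +
  fixes K I :: "'a set"
  assumes KI: "K \<union> I = V" "K \<inter> I = {}"
    and cliq: "clique E K" and indep: "independent E I"
begin

lemma K_adj: "u \<in> K \<Longrightarrow> v \<in> K \<Longrightarrow> u \<noteq> v \<Longrightarrow> adj E u v"
  using cliq unfolding clique_def by blast

lemma I_nadj: "u \<in> I \<Longrightarrow> v \<in> I \<Longrightarrow> \<not> adj E u v"
  using indep unfolding independent_def by blast

definition nice :: "'a \<Rightarrow> 'a list \<Rightarrow> bool" where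
  "nice s \<sigma> \<longleftrightarrow> ordering V \<sigma> \<and> hd \<sigma> = s \<and> (s \<notin> K \<longrightarrow> 1 < length \<sigma> \<longrightarrow> adj E s (\<sigma> ! 1))"

lemma par_in_C:
  assumes n: "nice s \<sigma>" and v: "v \<in> V" "v \<noteq> s"
  shows "hd (filter (\<lambda>x. adj E x v) \<sigma>) \<in> insert s K"
proof -
  have o: "ordering V \<sigma>" and hs: "hd \<sigma> = s" using n unfolding nice_def by auto
  have ne: "\<sigma> \<noteq> []" using ord_ne[OF o] .
  obtain x where x: "x \<in> set \<sigma>" "adj E x v" using nbr_in[OF o v(1)] v hs by blast
  let ?h = "hd (filter (\<lambda>x. adj E x v) \<sigma>)"
  have "filter (\<lambda>x. adj E x v) \<sigma> \<noteq> []" using x by (metis filter_empty_conv)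
  then have "?h \<in> set (filter (\<lambda>x. adj E x v) \<sigma>)" by (rule hd_in_set)
  then have h: "adj E ?h v" "?h \<in> V" using adj_V by auto
  show ?thesis
  proof (cases "v \<in> I")
    case True
    then have "?h \<notin> I" using I_nadj h(1) by blast
    then show ?thesis using h KI by auto
  next
    case False
    then have vK: "v \<in> K" using v KI by auto
    show ?thesis
    proof (cases "adj E s v")
      case True
      obtain rest where "\<sigma> = s # rest" using ne hs by (cases \<sigma>) auto
      then show ?thesis using True by simp
    next
      case False
      then have sK: "s \<notin> K" using K_adj vK v by blast
      have sV: "set \<sigma> = V" "distinct \<sigma>" using o unfolding ordering_def by auto
      obtain rest where r: "\<sigma> = s # rest" using ne hs by (cases \<sigma>) auto
      then have "v \<in> set rest" using v sV by auto
      then obtain b rest' where r': "rest = b # rest'" by (cases rest) auto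
      then have "1 < length \<sigma>" using r by simp
      then have sb: "adj E s b" using n sK r r' unfolding nice_def by simp
      have "s \<in> I" using sK sV r KI by auto
      then have "b \<notin> I" using sb I_nadj by blast
      then have bK: "b \<in> K" using sb adj_V KI by auto
      have "b \<noteq> v" using sb False by blast
      then have "adj E b v" using K_adj bK vK by blast
      then show ?thesis using r r' False bK by simp
    qed
  qed
qed

lemma F_eq:
  assumes ns: "nice s \<sigma>" and nt: "nice s \<tau>"
    and f: "filter (\<lambda>x. x \<in> insert s K) \<sigma> = filter (\<lambda>x. x \<in> insert s K) \<tau>"
  shows "F_tree E \<sigma> = F_tree E \<tau>"
proof -
  have os: "ordering V \<sigma>" "hd \<sigma> = s" and ot: "ordering V \<tau>" "hd \<tau> = s"
    using ns nt unfolding nice_def by auto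
  have "hd (filter (\<lambda>x. adj E x v) \<sigma>) = hd (filter (\<lambda>x. adj E x v) \<tau>)"
    if v: "v \<in> V" "v \<noteq> s" for v
  proof -
    have "hd (filter (\<lambda>x. adj E x v) \<sigma>) = hd (filter (\<lambda>x. adj E x v) (filter (\<lambda>x. x \<in> insert s K) \<sigma>))"
      using nbr_in[OF os(1) v(1)] v os par_in_C[OF ns v] by (intro hd_filter_restrict) auto
    also have "\<dots> = hd (filter (\<lambda>x. adj E x v) (filter (\<lambda>x. x \<in> insert s K) \<tau>))" using f by simp
    also have "\<dots> = hd (filter (\<lambda>x. adj E x v) \<tau>)"
      using nbr_in[OF ot(1) v(1)] v ot par_in_C[OF nt v] by (intro hd_filter_restrict[symmetric]) auto
    finally show ?thesis .
  qed
  then show ?thesis unfolding F_tree_alt[OF os(1)] F_tree_alt[OF ot(1)] os(2) ot(2)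
    by (intro image_cong) auto
qed

end



lemma split_filter:
  "(\<forall>i j. i < j \<longrightarrow> j < length xs \<longrightarrow> P (xs ! j) \<longrightarrow> P (xs ! i)) \<Longrightarrow> (\<forall>x\<in>set xs. P x \<longrightarrow> Q x) \<Longrightarrow>
   filter Q xs = filter P xs @ filter (\<lambda>x. Q x \<and> \<not> P x) xs"
proof (induction xs)
  case Nil
  then show ?case by simp
next
  case (Cons x xs)
  have h: "\<forall>i j. i < j \<longrightarrow> j < length xs \<longrightarrow> P (xs ! j) \<longrightarrow> P (xs ! i)"
  proof (intro allI impI)
    fix i j assume "i < j" "j < length xs" "P (xs ! j)"
    then show "P (xs ! i)" using Cons.prems(1)[rule_format, of "Suc i" "Suc j"] by simp
  qed
  show ?case
  proof (cases "P x")
    case True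
    then show ?thesis using Cons.IH[OF h] Cons.prems by simp
  next
    case False
    have np: "\<forall>y\<in>set xs. \<not> P y"
    proof
      fix y assume "y \<in> set xs"
      then obtain j where "j < length xs" "xs ! j = y" by (metis in_set_conv_nth)
      then show "\<not> P y" using Cons.prems(1)[rule_format, of 0 "Suc j"] False by auto
    qed
    then have "filter P xs = []" by (simp add: filter_empty_conv)
    moreover have "filter Q xs = filter (\<lambda>x. Q x \<and> \<not> P x) xs" using np by (intro filter_cong) auto
    ultimately show ?thesis using False by simp
  qed
qed

locale srch = sg +
  fixes better :: "'a \<Rightarrow> 'a list \<Rightarrow> 'a \<Rightarrow> 'a \<Rightarrow> bool"
  assumes b_irr: "\<not> better s p u u"
    and b_trans: "better s p u v \<Longrightarrow> better s p v w \<Longrightarrow> better s p u w"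
    and b_start: "\<not> better s [] u s"
    and b_dom: "u \<noteq> s \<Longrightarrow> w \<noteq> s \<Longrightarrow> length p < card V \<Longrightarrow>
       (\<forall>j<length p. adj E (p ! j) u \<longrightarrow> adj E (p ! j) w) \<Longrightarrow> \<not> better s p u w"
    and b_sdom: "u \<noteq> s \<Longrightarrow> w \<noteq> s \<Longrightarrow> length p < card V \<Longrightarrow>
       (\<forall>j<length p. adj E (p ! j) w \<longrightarrow> adj E (p ! j) u) \<Longrightarrow>
       (\<exists>j<length p. adj E (p ! j) u \<and> \<not> adj E (p ! j) w) \<Longrightarrow> better s p u w"
begin

lemma nbrs_nonempty:
  assumes "s \<in> V" "v \<in> V" "v \<noteq> s" "set N1 = {w\<in>V. adj E s w}"
  shows "N1 \<noteq> []"
proof -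
  obtain w where "adj E s w" using has_nbr assms by blast
  then have "w \<in> set N1" using assms adj_V by auto
  then show ?thesis by auto
qed

lemma fwd:
  assumes bo: "bfs_ordering V E \<beta>"
  shows "\<exists>\<sigma>. search_ordering V (better (hd \<beta>)) \<sigma> \<and> hd \<sigma> = hd \<beta> \<and> F_tree E \<sigma> = F_tree E \<beta>"
proof -
  define s where "s = hd \<beta>"
  have r: "bfs_run V E \<beta> []" and ob: "ordering V \<beta>" using bo unfolding bfs_ordering_def by auto
  have ne: "\<beta> \<noteq> []" using ord_ne[OF ob] .
  have d\<beta>: "distinct \<beta>" and sV: "set \<beta> = V" using ob unfolding ordering_def by auto
  obtain N1 rest where sh: "\<beta> = s # N1 @ rest" and sN1: "set N1 = {w\<in>V. adj E s w}"
    using bfs_shape[OF r ne] unfolding s_def by auto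
  have sVV: "s \<in> V" using sh sV by auto
  have snot: "s \<notin> set (N1 @ rest)" using d\<beta> sh by simp
  define P where "P = s # filter (\<lambda>x. x \<in> K) (N1 @ rest)"
  have P0: "P ! 0 = s" "hd P = s" unfolding P_def by auto
  have dP: "distinct P" unfolding P_def using d\<beta> sh by auto
  have PV: "set P \<subseteq> V" unfolding P_def using sV sh by auto
  have PK: "P ! i \<in> K" if i0: "0 < i" "i < length P" for i
  proof -
    obtain k where k: "i = Suc k" using i0 by (cases i) auto
    have "P ! i = filter (\<lambda>x. x \<in> K) (N1 @ rest) ! k" unfolding P_def k by simp
    moreover have "k < length (filter (\<lambda>x. x \<in> K) (N1 @ rest))" using i0 k unfolding P_def by simp
    ultimately show ?thesis by (metis mem_Collect_eq nth_mem set_filter)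
  qed
  have lenP: "length P \<le> card V" using dP PV fin by (metis distinct_card card_mono)
  have CP: "insert s K \<subseteq> set P"
  proof
    fix k assume "k \<in> insert s K"
    then show "k \<in> set P"
    proof
      assume "k \<in> K"
      then have "k \<in> V" using KI by auto
      then have "k = s \<or> k \<in> set (N1 @ rest)" using sV sh by auto
      then show "k \<in> set P" unfolding P_def using \<open>k \<in> K\<close> by auto
    qed (simp add: P_def)
  qed
  have PsI: "P = s # N1 @ filter (\<lambda>x. x \<in> K) rest" if "s \<notin> K"
  proof -
    have "s \<in> I" using that sVV KI by auto
    have "\<forall>x\<in>set N1. x \<in> K"
    proof
      fix x assume "x \<in> set N1"
      then have "adj E s x" "x \<in> V" using sN1 by auto
      then show "x \<in> K" using I_nadj \<open>s \<in> I\<close> KI by blast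
    qed
    then have "filter (\<lambda>x. x \<in> K) N1 = N1" by simp
    then show ?thesis unfolding P_def by simp
  qed
  have valid: "\<forall>i<length P. \<forall>u\<in>V - set (take i P). \<not> better s (take i P) u (P ! i)"
  proof (intro allI impI ballI)
    fix i u assume i: "i < length P" and u: "u \<in> V - set (take i P)"
    show "\<not> better s (take i P) u (P ! i)"
    proof (cases "i = 0")
      case True
      then show ?thesis using P0 b_start by simp
    next
      case False
      have wK: "P ! i \<in> K" using PK False i by simp
      have ws: "P ! i \<noteq> s" using dP P0 False i by (metis nth_eq_iff_index_eq zero_less_iff_neq_zero gr_zeroI length_pos_if_in_set nth_mem)
      have "s \<in> set (take i P)" using False i P0 by (metis gr_zeroI hd_take list.set_sel(1) take_eq_Nil length_0_conv less_nat_zero_code)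
      then have us: "u \<noteq> s" using u by blast
      have lt: "length (take i P) < card V" using i lenP by simp
      have dom: "\<forall>j<length (take i P). adj E (take i P ! j) u \<longrightarrow> adj E (take i P ! j) (P ! i)"
      proof (intro allI impI)
        fix j assume j: "j < length (take i P)" and a: "adj E (take i P ! j) u"
        have ji: "j < i" using j by simp
        have tj: "take i P ! j = P ! j" using ji by simp
        show "adj E (take i P ! j) (P ! i)"
        proof (cases "j = 0")
          case False
          have "P ! j \<in> K" using PK False ji i by simp
          moreover have "P ! j \<noteq> P ! i" using dP ji i by (simp add: nth_eq_iff_index_eq)
          ultimately show ?thesis using K_adj wK tj by simp
        next
          case True
          then have aj: "adj E s u" using a tj P0 by simp
          show ?thesis
          proof (cases "s \<in> K")
            case True
            then show ?thesis using K_adj wK ws \<open>j = 0\<close> tj P0 by simp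
          next
            case sK: False
            show ?thesis
            proof (cases "i \<le> length N1")
              case True
              have "P ! i = N1 ! (i - 1)" using PsI[OF sK] True False by (cases i) (auto simp: nth_append)
              moreover have "i - 1 < length N1" using True False by simp
              ultimately have "P ! i \<in> set N1" by simp
              then show ?thesis using sN1 \<open>j = 0\<close> tj P0 by simp
            next
              case False
              have "take i P = s # N1 @ take (i - 1 - length N1) (filter (\<lambda>x. x \<in> K) rest)"
                using PsI[OF sK] False by (cases i) auto
              then have "set N1 \<subseteq> set (take i P)" by auto
              then have "u \<notin> set N1" using u by blast
              then show ?thesis using aj sN1 u by auto
            qed
          qed
        qed
      qed
      show ?thesis using b_dom[OF us ws lt dom] .
    qed
  qed
  have "\<exists>ys. search_ordering V (better s) (P @ ys)"
    apply (rule search_extend[where B="better s", OF fin])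
    apply (rule b_irr)
    apply (erule (1) b_trans)
    using dP PV valid by auto
  then obtain ys where so: "search_ordering V (better s) (P @ ys)" by blast
  define \<sigma> where "\<sigma> = P @ ys"
  have o\<sigma>: "ordering V \<sigma>" using so unfolding \<sigma>_def search_ordering_def by simp
  have h\<sigma>: "hd \<sigma> = s" unfolding \<sigma>_def P_def by simp
  have N1ne: "N1 \<noteq> []" if "1 < length \<gamma>" "ordering V \<gamma>" "hd \<gamma> = s" for \<gamma>
  proof -
    have g: "\<gamma> \<noteq> []" "distinct \<gamma>" "set \<gamma> = V" using that unfolding ordering_def by auto
    have "\<gamma> ! 1 \<in> V" using g that(1) by auto
    moreover have "\<gamma> ! 1 \<noteq> \<gamma> ! 0" using g that(1) by (simp add: nth_eq_iff_index_eq)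
    ultimately have "\<gamma> ! 1 \<in> V" "\<gamma> ! 1 \<noteq> s" using that(3) g by (auto simp: hd_conv_nth)
    then show ?thesis using nbrs_nonempty[OF sVV _ _ sN1] by blast
  qed
  have n\<beta>: "nice s \<beta>"
    unfolding nice_def
  proof (intro conjI impI)
    assume "s \<notin> K" "1 < length \<beta>"
    then have "N1 \<noteq> []" using N1ne ob s_def by blast
    then have "\<beta> ! 1 \<in> set N1" using sh by (cases N1) auto
    then show "adj E s (\<beta> ! 1)" using sN1 by simp
  qed (use ob s_def in auto)
  have n\<sigma>: "nice s \<sigma>"
    unfolding nice_def
  proof (intro conjI impI)
    assume sK: "s \<notin> K" "1 < length \<sigma>"
    then have "N1 \<noteq> []" using N1ne o\<sigma> h\<sigma> by blast
    then have "\<sigma> ! 1 \<in> set N1" unfolding \<sigma>_def using PsI[OF sK(1)] by (cases N1) auto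
    then show "adj E s (\<sigma> ! 1)" using sN1 by simp
  qed (use o\<sigma> h\<sigma> in auto)
  have fP: "filter (\<lambda>x. x \<in> insert s K) P = P"
  proof -
    have "\<forall>x\<in>set P. x \<in> insert s K" unfolding P_def by auto
    then show ?thesis by simp
  qed
  have fys: "filter (\<lambda>x. x \<in> insert s K) ys = []"
  proof -
    have "distinct (P @ ys)" using o\<sigma> unfolding \<sigma>_def ordering_def by simp
    then have "\<forall>x\<in>set ys. x \<notin> insert s K" using CP by auto
    then show ?thesis by (simp add: filter_empty_conv)
  qed
  have f\<beta>: "filter (\<lambda>x. x \<in> insert s K) \<beta> = P"
  proof -
    have "filter (\<lambda>x. x \<in> insert s K) (N1 @ rest) = filter (\<lambda>x. x \<in> K) (N1 @ rest)"
      using snot by (intro filter_cong) auto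
    then show ?thesis unfolding P_def using sh by simp
  qed
  have "F_tree E \<sigma> = F_tree E \<beta>"
    by (rule F_eq[OF n\<sigma> n\<beta>]) (unfold \<sigma>_def filter_append fP fys f\<beta>, simp)
  then show ?thesis using so h\<sigma> unfolding \<sigma>_def s_def by blast
qed

end



context sg begin
lemma KV: "x \<in> K \<Longrightarrow> x \<in> V" using KI(1) by blast
lemma IV: "x \<in> I \<Longrightarrow> x \<in> V" using KI(1) by blast
lemma KnI: "x \<in> K \<Longrightarrow> x \<notin> I" using KI(2) by blast
lemma VKI: "x \<in> V \<Longrightarrow> x \<notin> K \<Longrightarrow> x \<in> I" using KI(1) by blast
lemma finI: "finite I" using fin KI(1) by (metis finite_Un)
end

context srch begin

lemma bwd:
  assumes sVV: "s \<in> V" and so: "search_ordering V (better s) \<sigma>" and hs: "hd \<sigma> = s"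
  shows "\<exists>\<beta>. bfs_ordering V E \<beta> \<and> F_tree E \<beta> = F_tree E \<sigma>"
proof -
  have o\<sigma>: "ordering V \<sigma>" using so unfolding search_ordering_def by simp
  have valid: "\<forall>i<length \<sigma>. \<forall>u\<in>V - set (take i \<sigma>). \<not> better s (take i \<sigma>) u (\<sigma> ! i)"
    using so unfolding search_ordering_def by simp
  have ne: "\<sigma> \<noteq> []" using ord_ne[OF o\<sigma>] .
  have d\<sigma>: "distinct \<sigma>" and sV: "set \<sigma> = V" using o\<sigma> unfolding ordering_def by auto
  obtain \<tau> where st: "\<sigma> = s # \<tau>" using ne hs by (cases \<sigma>) auto
  have s\<tau>: "s \<notin> set \<tau>" using d\<sigma> st by simp
  have lenV: "length \<sigma> = card V" using d\<sigma> sV by (metis distinct_card)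
  have s0: "\<sigma> ! 0 = s" using st by simp
  show ?thesis
  proof (cases "s \<in> K")
    case True
    obtain L where L: "distinct L" "set L = {x\<in>I. adj E s x}"
      using finite_distinct_list[of "{x\<in>I. adj E s x}"] finI by auto
    define N1 where "N1 = filter (\<lambda>x. x \<in> K) \<tau> @ L"
    have d\<tau>: "distinct \<tau>" using d\<sigma> st by simp
    have disj: "set (filter (\<lambda>x. x \<in> K) \<tau>) \<inter> set L = {}" using L KnI by auto
    have dN1: "distinct N1" unfolding N1_def using L(1) d\<tau> disj by simp
    have sN1: "set N1 = {w \<in> V. adj E s w \<and> w \<notin> set [] \<and> w \<notin> set [s]}"
    proof
      show "set N1 \<subseteq> {w \<in> V. adj E s w \<and> w \<notin> set [] \<and> w \<notin> set [s]}"
      proof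
        fix w assume "w \<in> set N1"
        then have "(w \<in> K \<and> w \<in> set \<tau>) \<or> w \<in> set L" unfolding N1_def by auto
        then have "w \<in> V \<and> adj E s w"
        proof
          assume a: "w \<in> K \<and> w \<in> set \<tau>"
          then have "w \<noteq> s" using s\<tau> by blast
          then have "adj E s w" using K_adj True a by blast
          moreover have "w \<in> V" using a sV st by auto
          ultimately show ?thesis by blast
        next
          assume "w \<in> set L"
          then show ?thesis using L IV by blast
        qed
        then show "w \<in> {w \<in> V. adj E s w \<and> w \<notin> set [] \<and> w \<notin> set [s]}"
          using adj_irr by auto
      qed
    next
      show "{w \<in> V. adj E s w \<and> w \<notin> set [] \<and> w \<notin> set [s]} \<subseteq> set N1"
      proof
        fix w assume w: "w \<in> {w \<in> V. adj E s w \<and> w \<notin> set [] \<and> w \<notin> set [s]}"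
        show "w \<in> set N1"
        proof (cases "w \<in> K")
          case True
          then have "w \<in> set \<tau>" using w sV st by auto
          then show ?thesis unfolding N1_def using True by simp
        next
          case False
          then have "w \<in> I" using w VKI by auto
          then show ?thesis unfolding N1_def using L w by simp
        qed
      qed
    qed
    have r1: "bfs_run V E ([] @ [s]) ([] @ N1)"
      by (rule bfs_run.step[OF bfs_run.start[OF sVV] dN1]) (use sN1 in simp)
    obtain ys where r: "bfs_run V E ([s] @ N1 @ ys) []"
      using bfs_complete[OF r1] by auto
    define \<beta> where "\<beta> = s # N1 @ ys"
    have bo: "bfs_ordering V E \<beta>" using bfs_final r unfolding \<beta>_def by simp
    have ob: "ordering V \<beta>" using bo unfolding bfs_ordering_def by simp
    have n\<beta>: "nice s \<beta>" unfolding nice_def using ob True \<beta>_def by simp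
    have n\<sigma>: "nice s \<sigma>" unfolding nice_def using o\<sigma> True hs by simp
    have fys: "filter (\<lambda>x. x \<in> K) ys = []"
    proof -
      have db: "distinct \<beta>" using ob unfolding ordering_def by simp
      have "\<forall>x\<in>set ys. x \<notin> K"
      proof
        fix x assume x: "x \<in> set ys"
        show "x \<notin> K"
        proof
          assume xK: "x \<in> K"
          then have "x \<in> V" using KV by blast
          then have "x = s \<or> x \<in> set \<tau>" using sV st by auto
          then have "x \<in> set (s # N1)" unfolding N1_def using xK by auto
          then show False using db x unfolding \<beta>_def by auto
        qed
      qed
      then show ?thesis by (simp add: filter_empty_conv)
    qed
    have fL: "filter (\<lambda>x. x \<in> K) L = []" using L KnI by (auto simp: filter_empty_conv)
    have "filter (\<lambda>x. x \<in> insert s K) \<beta> = filter (\<lambda>x. x \<in> insert s K) \<sigma>"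
      using True unfolding \<beta>_def N1_def st by (simp add: insert_absorb fys fL)
    then have "F_tree E \<beta> = F_tree E \<sigma>" by (rule F_eq[OF n\<beta> n\<sigma>])
    then show ?thesis using bo by blast
  next
    case sK: False
    have sI: "s \<in> I" using sK sVV VKI by blast
    have nbK: "x \<in> K" if "adj E s x" for x
    proof -
      have "x \<in> V" using adj_V that by blast
      moreover have "x \<notin> I" using I_nadj sI that by blast
      ultimately show ?thesis using VKI by blast
    qed
    have NF: "\<forall>i. 0 < i \<longrightarrow> i < length \<sigma> \<longrightarrow> (\<exists>j. i < j \<and> j < length \<sigma> \<and> adj E s (\<sigma> ! j)) \<longrightarrow> adj E s (\<sigma> ! i)"
    proof (intro allI)
      fix i
      show "0 < i \<longrightarrow> i < length \<sigma> \<longrightarrow> (\<exists>j. i < j \<and> j < length \<sigma> \<and> adj E s (\<sigma> ! j)) \<longrightarrow> adj E s (\<sigma> ! i)"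
      proof (induction i rule: less_induct)
        case (less i)
        show ?case
        proof (intro impI)
          assume i0: "0 < i" and il: "i < length \<sigma>" and ex: "\<exists>j. i < j \<and> j < length \<sigma> \<and> adj E s (\<sigma> ! j)"
          obtain j where j: "i < j" "j < length \<sigma>" "adj E s (\<sigma> ! j)" using ex by blast
          show "adj E s (\<sigma> ! i)"
          proof (rule ccontr)
            assume nw: "\<not> adj E s (\<sigma> ! i)"
            let ?p = "take i \<sigma>" and ?b = "\<sigma> ! j" and ?w = "\<sigma> ! i"
            have l0: "0 < length \<sigma>" using il by linarith
            have "?w \<noteq> \<sigma> ! 0" using nth_eq_iff_index_eq[OF d\<sigma> il l0] i0 by simp
            then have ws: "?w \<noteq> s" using s0 by simp
            have bs': "?b \<noteq> s" using j(3) adj_irr by blast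
            have lt: "length ?p < card V" using il lenV by simp
            have bK: "?b \<in> K" using nbK j(3) by simp
            have bnot: "?b \<in> V - set ?p"
            proof -
              have "?b \<in> V" using j sV by auto
              moreover have "?b \<notin> set ?p"
              proof
                assume "?b \<in> set ?p"
                then obtain k where k: "k < length ?p" "?p ! k = ?b" by (metis in_set_conv_nth)
                then have "\<sigma> ! k = \<sigma> ! j" "k < i" by auto
                then show False using d\<sigma> j by (simp add: nth_eq_iff_index_eq)
              qed
              ultimately show ?thesis by simp
            qed
            have dom: "\<forall>k<length ?p. adj E (?p ! k) ?w \<longrightarrow> adj E (?p ! k) ?b"
            proof (intro allI impI)
              fix k assume k: "k < length ?p" and a: "adj E (?p ! k) ?w"
              have ki: "k < i" and pk: "?p ! k = \<sigma> ! k" using k by auto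
              show "adj E (?p ! k) ?b"
              proof (cases "k = 0")
                case True
                then show ?thesis using a pk s0 nw by simp
              next
                case False
                have e: "\<exists>j'. k < j' \<and> j' < length \<sigma> \<and> adj E s (\<sigma> ! j')"
                  using j ki by (intro exI[of _ j]) simp
                have "k < length \<sigma>" using ki il by simp
                moreover have "0 < k" using False by simp
                ultimately have "adj E s (\<sigma> ! k)" using less.IH[OF ki] e by simp
                then have "\<sigma> ! k \<in> K" using nbK by simp
                moreover have "\<sigma> ! k \<noteq> ?b" using d\<sigma> ki j il by (simp add: nth_eq_iff_index_eq)
                ultimately show ?thesis using K_adj bK pk by simp
              qed
            qed
            have sd: "\<exists>k<length ?p. adj E (?p ! k) ?b \<and> \<not> adj E (?p ! k) ?w"
              using i0 il j(3) nw s0 by (intro exI[of _ 0]) simp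
            have "better s ?p ?b ?w" using b_sdom[OF bs' ws lt dom sd] .
            then show False using valid il bnot by blast
          qed
        qed
      qed
    qed
    show ?thesis
    proof (cases "\<exists>v\<in>V. v \<noteq> s")
      case False
      have VV: "V = {s}"
      proof
        show "V \<subseteq> {s}" using False by blast
        show "{s} \<subseteq> V" using sVV by blast
      qed
      have "set \<sigma> = {s}" using sV VV by simp
      then have "set \<tau> \<subseteq> {s}" using st by auto
      then have \<tau>e: "\<tau> = []" using s\<tau> by (cases \<tau>) auto
      have e0: "set ([]::'a list) = {w \<in> V. adj E s w \<and> w \<notin> set [] \<and> w \<notin> set [s]}"
        using VV by auto
      have "bfs_run V E ([] @ [s]) ([] @ [])"
        by (rule bfs_run.step[OF bfs_run.start[OF sVV] _ e0]) simp
      then have r0: "bfs_run V E \<sigma> []" using st \<tau>e by simp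
      have "bfs_ordering V E \<sigma>" by (rule bfs_final[OF r0])
      then show ?thesis by blast
    next
      case True
      define N1 where "N1 = filter (\<lambda>x. adj E s x) \<sigma>"
      have dN1: "distinct N1" unfolding N1_def using d\<sigma> by simp
      have sN1: "set N1 = {w\<in>V. adj E s w}" unfolding N1_def using sV by auto
      have sN1': "set N1 = {w \<in> V. adj E s w \<and> w \<notin> set [] \<and> w \<notin> set [s]}" using sN1 adj_irr by auto
      have N1ne: "N1 \<noteq> []" using True nbrs_nonempty[OF sVV _ _ sN1] by blast
      obtain a N1' where aN: "N1 = a # N1'" using N1ne by (cases N1) auto
      have "a \<in> set N1" using aN by simp
      then have as: "adj E s a" using sN1 by simp
      have aK: "a \<in> K" using nbK as by simp
      have r1: "bfs_run V E ([] @ [s]) ([] @ N1)"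
        by (rule bfs_run.step[OF bfs_run.start[OF sVV] dN1]) (use sN1' in simp)
      obtain L2 where L2: "distinct L2" "set L2 = {x\<in>I. adj E a x \<and> x \<noteq> s}"
        using finite_distinct_list[of "{x\<in>I. adj E a x \<and> x \<noteq> s}"] finI by auto
      define N2 where "N2 = filter (\<lambda>x. x \<in> K \<and> \<not> adj E s x) \<sigma> @ L2"
      have "set (filter (\<lambda>x. x \<in> K \<and> \<not> adj E s x) \<sigma>) \<inter> set L2 = {}" using L2 KnI by auto
      then have dN2: "distinct N2" unfolding N2_def using L2(1) d\<sigma> by simp
      have sN2: "set N2 = {w \<in> V. adj E a w \<and> w \<notin> set [s] \<and> w \<notin> set (a # N1')}"
      proof
        show "set N2 \<subseteq> {w \<in> V. adj E a w \<and> w \<notin> set [s] \<and> w \<notin> set (a # N1')}"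
        proof
          fix w assume w: "w \<in> set N2"
          show "w \<in> {w \<in> V. adj E a w \<and> w \<notin> set [s] \<and> w \<notin> set (a # N1')}"
          proof (cases "w \<in> K")
            case True
            then have "\<not> adj E s w" "w \<in> V" using w L2 KnI KV IV unfolding N2_def by auto
            moreover have "w \<noteq> a" using as calculation by blast
            moreover have "w \<noteq> s" using True sK by blast
            ultimately show ?thesis using K_adj aK True sN1 aN by auto
          next
            case False
            then have "w \<in> I" "adj E a w" "w \<noteq> s" "w \<in> V" using w L2 KnI KV IV unfolding N2_def by auto
            moreover have "w \<notin> set N1" using calculation sN1 nbK KnI by blast
            ultimately show ?thesis using aN by auto
          qed
        qed
      next
        show "{w \<in> V. adj E a w \<and> w \<notin> set [s] \<and> w \<notin> set (a # N1')} \<subseteq> set N2"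
        proof
          fix w assume w: "w \<in> {w \<in> V. adj E a w \<and> w \<notin> set [s] \<and> w \<notin> set (a # N1')}"
          then have w': "w \<in> V" "adj E a w" "w \<noteq> s" "\<not> adj E s w" using sN1 aN by auto
          show "w \<in> set N2"
          proof (cases "w \<in> K")
            case True
            then show ?thesis unfolding N2_def using w' sV by auto
          next
            case False
            then show ?thesis unfolding N2_def using w' L2 VKI by auto
          qed
        qed
      qed
      have r1': "bfs_run V E [s] (a # N1')" using r1 aN by simp
      have r2: "bfs_run V E ([s] @ [a]) (N1' @ N2)"
        by (rule bfs_run.step[OF r1' dN2 sN2])
      obtain ys where r: "bfs_run V E (([s] @ [a]) @ (N1' @ N2) @ ys) []"
        using bfs_complete[OF r2] by auto
      define \<beta> where "\<beta> = s # N1 @ N2 @ ys"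
      have bo: "bfs_ordering V E \<beta>" using bfs_final r aN unfolding \<beta>_def by simp
      have ob: "ordering V \<beta>" using bo unfolding bfs_ordering_def by simp
      have n\<beta>: "nice s \<beta>" unfolding nice_def using ob as aN \<beta>_def by simp
      have n\<sigma>: "nice s \<sigma>" unfolding nice_def
      proof (intro conjI impI)
        assume "1 < length \<sigma>"
        obtain b where b: "b \<in> V" "adj E s b" using has_nbr True sVV adj_V by blast
        then obtain j where j: "j < length \<sigma>" "\<sigma> ! j = b" using sV by (metis in_set_conv_nth)
        have "j \<noteq> 0"
        proof
          assume "j = 0" then show False using j b s0 adj_irr by simp
        qed
        show "adj E s (\<sigma> ! 1)"
        proof (cases "j = 1")
          case True
          then show ?thesis using j b by simp
        next
          case False
          have e: "\<exists>j'. 1 < j' \<and> j' < length \<sigma> \<and> adj E s (\<sigma> ! j')"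
            using j b False \<open>j \<noteq> 0\<close> by (intro exI[of _ j]) simp
          show ?thesis using NF[rule_format, of 1] \<open>1 < length \<sigma>\<close> e by simp
        qed
      qed (use o\<sigma> hs in auto)
      have N1K: "\<forall>x\<in>set N1. x \<in> K" using sN1 nbK by auto
      have fys: "filter (\<lambda>x. x \<in> K) ys = []"
      proof -
        have db: "distinct \<beta>" using ob unfolding ordering_def by simp
        have "\<forall>x\<in>set ys. x \<notin> K"
        proof
          fix x assume x: "x \<in> set ys"
          show "x \<notin> K"
          proof
            assume xK: "x \<in> K"
            then have "x \<in> V" using KV by blast
            then have "x \<in> set \<sigma>" using sV by auto
            then have "x \<in> set N1 \<or> x \<in> set N2" unfolding N1_def N2_def using xK by auto
            then show False using db x unfolding \<beta>_def by auto
          qed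
        qed
        then show ?thesis by (simp add: filter_empty_conv)
      qed
      have fL: "filter (\<lambda>x. x \<in> K) L2 = []" using L2 KnI by (auto simp: filter_empty_conv)
      have fb: "filter (\<lambda>x. x \<in> insert s K) \<beta> = s # N1 @ filter (\<lambda>x. x \<in> K \<and> \<not> adj E s x) \<sigma>"
      proof -
        have "filter (\<lambda>x. x \<in> insert s K) (N1 @ N2 @ ys) = filter (\<lambda>x. x \<in> K) (N1 @ N2 @ ys)"
          using ob unfolding \<beta>_def ordering_def by (intro filter_cong) auto
        moreover have "filter (\<lambda>x. x \<in> K) N1 = N1" using N1K by simp
        moreover have "filter (\<lambda>x. x \<in> K) N2 = filter (\<lambda>x. x \<in> K \<and> \<not> adj E s x) \<sigma>"
          unfolding N2_def using fL by (simp add: conj_commute)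
        ultimately show ?thesis unfolding \<beta>_def using fys by simp
      qed
      have split: "filter (\<lambda>x. x \<in> K) \<tau> = filter (\<lambda>x. adj E s x) \<tau> @ filter (\<lambda>x. x \<in> K \<and> \<not> adj E s x) \<tau>"
      proof (rule split_filter)
        show "\<forall>i j. i < j \<longrightarrow> j < length \<tau> \<longrightarrow> adj E s (\<tau> ! j) \<longrightarrow> adj E s (\<tau> ! i)"
        proof (intro allI impI)
          fix i j assume "i < j" "j < length \<tau>" "adj E s (\<tau> ! j)"
          then have e: "\<exists>j'. Suc i < j' \<and> j' < length \<sigma> \<and> adj E s (\<sigma> ! j')"
            using st by (intro exI[of _ "Suc j"]) simp
          have "0 < Suc i" "Suc i < length \<sigma>" using \<open>i < j\<close> \<open>j < length \<tau>\<close> st by auto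
          then have "adj E s (\<sigma> ! Suc i)" using NF[rule_format, of "Suc i"] e by simp
          then show "adj E s (\<tau> ! i)" using st by simp
        qed
      qed (use nbK in auto)
      have fs: "filter (\<lambda>x. x \<in> insert s K) \<sigma> = s # N1 @ filter (\<lambda>x. x \<in> K \<and> \<not> adj E s x) \<sigma>"
      proof -
        have "filter (\<lambda>x. x \<in> insert s K) \<tau> = filter (\<lambda>x. x \<in> K) \<tau>"
          using s\<tau> by (intro filter_cong) auto
        then show ?thesis unfolding N1_def st using split sK adj_irr by simp
      qed
      have "F_tree E \<beta> = F_tree E \<sigma>" by (rule F_eq[OF n\<beta> n\<sigma>]) (simp only: fb fs)
      then show ?thesis using bo by blast
    qed
  qed
qed

end



context srch begin
lemma equiv:
  "(\<exists>\<beta>. bfs_ordering V E \<beta> \<and> F_tree E \<beta> = T) \<longleftrightarrow>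
   (\<exists>\<sigma>. (\<exists>s\<in>V. search_ordering V (better s) \<sigma> \<and> hd \<sigma> = s) \<and> F_tree E \<sigma> = T)"
proof
  assume "\<exists>\<beta>. bfs_ordering V E \<beta> \<and> F_tree E \<beta> = T"
  then obtain \<beta> where b: "bfs_ordering V E \<beta>" "F_tree E \<beta> = T" by blast
  have ob: "ordering V \<beta>" using b unfolding bfs_ordering_def by simp
  have "hd \<beta> \<in> V" using ob ord_ne[OF ob] unfolding ordering_def by auto
  then show "\<exists>\<sigma>. (\<exists>s\<in>V. search_ordering V (better s) \<sigma> \<and> hd \<sigma> = s) \<and> F_tree E \<sigma> = T"
    using fwd[OF b(1)] b(2) by metis
next
  assume "\<exists>\<sigma>. (\<exists>s\<in>V. search_ordering V (better s) \<sigma> \<and> hd \<sigma> = s) \<and> F_tree E \<sigma> = T"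
  then obtain \<sigma> s where "s \<in> V" "search_ordering V (better s) \<sigma>" "hd \<sigma> = s" "F_tree E \<sigma> = T" by blast
  then show "\<exists>\<beta>. bfs_ordering V E \<beta> \<and> F_tree E \<beta> = T" using bwd by metis
qed
end

lemma sorted_upt_dec: "length p < n \<Longrightarrow> sorted_wrt (\<lambda>a b. (n::nat) - (b + 1) < n - (a + 1)) [0..<length p]"
  by (rule sorted_wrt_mono_rel[OF _ sorted_wrt_upt]) auto

lemma sorted_rev_dec: "sorted_wrt (\<lambda>a b. (b::nat) + 1 < a + 1) (rev [0..<m])"
  unfolding sorted_wrt_rev by (rule sorted_wrt_mono_rel[OF _ sorted_wrt_upt]) auto

lemma lbfs_label_eq: "u \<noteq> s \<Longrightarrow> lbfs_label E n s p u =
   map (\<lambda>j. n - (j + 1)) (filter (\<lambda>j. adj E (p ! j) u) [0..<length p])"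
  unfolding lbfs_label_def lc_map_filter by simp

lemma ldfs_label_eq: "u \<noteq> s \<Longrightarrow> ldfs_label E s p u =
   map (\<lambda>j. j + 1) (filter (\<lambda>j. adj E (p ! j) u) (rev [0..<length p]))"
  unfolding ldfs_label_def lc_map_filter by simp

context sg begin

lemma srch_mns: "srch V E K I (\<lambda>s p u w. mns_label E (card V) s p w \<subset> mns_label E (card V) s p u)"
proof unfold_locales
  fix s p u v w
  show "\<not> mns_label E (card V) s p u \<subset> mns_label E (card V) s p u" by simp
  show "mns_label E (card V) s p v \<subset> mns_label E (card V) s p u \<Longrightarrow>
        mns_label E (card V) s p w \<subset> mns_label E (card V) s p v \<Longrightarrow>
        mns_label E (card V) s p w \<subset> mns_label E (card V) s p u" by auto
  show "\<not> mns_label E (card V) s [] s \<subset> mns_label E (card V) s [] u"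
    unfolding mns_label_def by auto
next
  fix s p u w
  assume "u \<noteq> s" "w \<noteq> s" "\<forall>j<length p. adj E (p ! j) u \<longrightarrow> adj E (p ! j) w"
  then show "\<not> mns_label E (card V) s p w \<subset> mns_label E (card V) s p u"
    unfolding mns_label_def by auto
next
  fix s p u w
  assume a: "u \<noteq> s" "w \<noteq> s" "\<forall>j<length p. adj E (p ! j) w \<longrightarrow> adj E (p ! j) u"
    "\<exists>j<length p. adj E (p ! j) u \<and> \<not> adj E (p ! j) w"
  then obtain j where j: "j < length p" "adj E (p ! j) u" "\<not> adj E (p ! j) w" by blast
  have "j + 1 \<in> mns_label E (card V) s p u" using j a unfolding mns_label_def by auto
  moreover have "j + 1 \<notin> mns_label E (card V) s p w" using j a unfolding mns_label_def by auto
  moreover have "mns_label E (card V) s p w \<subseteq> mns_label E (card V) s p u"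
    using a unfolding mns_label_def by auto
  ultimately show "mns_label E (card V) s p w \<subset> mns_label E (card V) s p u" by blast
qed

lemma srch_mcs: "srch V E K I (\<lambda>s p u w. mcs_count E p w < mcs_count E p u)"
proof unfold_locales
  fix s p u v w
  show "\<not> mcs_count E p u < mcs_count E p u" by simp
  show "mcs_count E p v < mcs_count E p u \<Longrightarrow> mcs_count E p w < mcs_count E p v \<Longrightarrow>
        mcs_count E p w < mcs_count E p u" by simp
  show "\<not> mcs_count E [] s < mcs_count E [] u" unfolding mcs_count_def by simp
next
  fix s p u w
  assume "\<forall>j<length p. adj E (p ! j) u \<longrightarrow> adj E (p ! j) w"
  then have "{j. j < length p \<and> adj E (p ! j) u} \<subseteq> {j. j < length p \<and> adj E (p ! j) w}" by auto
  then have "card {j. j < length p \<and> adj E (p ! j) u} \<le> card {j. j < length p \<and> adj E (p ! j) w}"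
    by (rule card_mono[rotated]) simp
  then show "\<not> mcs_count E p w < mcs_count E p u" unfolding mcs_count_def by simp
next
  fix s p u w
  assume a: "\<forall>j<length p. adj E (p ! j) w \<longrightarrow> adj E (p ! j) u"
    "\<exists>j<length p. adj E (p ! j) u \<and> \<not> adj E (p ! j) w"
  then have "{j. j < length p \<and> adj E (p ! j) w} \<subset> {j. j < length p \<and> adj E (p ! j) u}" by auto
  then have "card {j. j < length p \<and> adj E (p ! j) w} < card {j. j < length p \<and> adj E (p ! j) u}"
    by (rule psubset_card_mono[rotated]) simp
  then show "mcs_count E p w < mcs_count E p u" unfolding mcs_count_def by simp
qed

lemma srch_lbfs: "srch V E K I (\<lambda>s p u w. lex_less (lbfs_label E (card V) s p w) (lbfs_label E (card V) s p u))"
proof unfold_locales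
  fix s p u v w
  show "\<not> lex_less (lbfs_label E (card V) s p u) (lbfs_label E (card V) s p u)" by (rule lex_less_irrefl)
  show "lex_less (lbfs_label E (card V) s p v) (lbfs_label E (card V) s p u) \<Longrightarrow>
        lex_less (lbfs_label E (card V) s p w) (lbfs_label E (card V) s p v) \<Longrightarrow>
        lex_less (lbfs_label E (card V) s p w) (lbfs_label E (card V) s p u)"
    by (rule lex_less_trans)
  show "\<not> lex_less (lbfs_label E (card V) s [] s) (lbfs_label E (card V) s [] u)"
    unfolding lbfs_label_def lex_less_def by auto
next
  fix s p u w
  assume a: "u \<noteq> s" "w \<noteq> s" "length p < card V" "\<forall>j<length p. adj E (p ! j) u \<longrightarrow> adj E (p ! j) w"
  show "\<not> lex_less (lbfs_label E (card V) s p w) (lbfs_label E (card V) s p u)"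
    unfolding lbfs_label_eq[OF a(1)] lbfs_label_eq[OF a(2)]
    by (rule lex_not_less_dom[OF sorted_upt_dec[OF a(3)]]) (use a(4) in auto)
next
  fix s p u w
  assume a: "u \<noteq> s" "w \<noteq> s" "length p < card V" "\<forall>j<length p. adj E (p ! j) w \<longrightarrow> adj E (p ! j) u"
    "\<exists>j<length p. adj E (p ! j) u \<and> \<not> adj E (p ! j) w"
  show "lex_less (lbfs_label E (card V) s p w) (lbfs_label E (card V) s p u)"
    unfolding lbfs_label_eq[OF a(1)] lbfs_label_eq[OF a(2)]
    by (rule lex_less_sdom[OF sorted_upt_dec[OF a(3)]]) (use a(4,5) in auto)
qed

lemma srch_ldfs: "srch V E K I (\<lambda>s p u w. lex_less (ldfs_label E s p w) (ldfs_label E s p u))"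
proof unfold_locales
  fix s p u v w
  show "\<not> lex_less (ldfs_label E s p u) (ldfs_label E s p u)" by (rule lex_less_irrefl)
  show "lex_less (ldfs_label E s p v) (ldfs_label E s p u) \<Longrightarrow>
        lex_less (ldfs_label E s p w) (ldfs_label E s p v) \<Longrightarrow>
        lex_less (ldfs_label E s p w) (ldfs_label E s p u)"
    by (rule lex_less_trans)
  show "\<not> lex_less (ldfs_label E s [] s) (ldfs_label E s [] u)"
    unfolding ldfs_label_def lex_less_def by auto
next
  fix s p u w
  assume a: "u \<noteq> s" "w \<noteq> s" "length p < card V" "\<forall>j<length p. adj E (p ! j) u \<longrightarrow> adj E (p ! j) w"
  show "\<not> lex_less (ldfs_label E s p w) (ldfs_label E s p u)"
    unfolding ldfs_label_eq[OF a(1)] ldfs_label_eq[OF a(2)]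
    by (rule lex_not_less_dom[OF sorted_rev_dec]) (use a(4) in auto)
next
  fix s p u w
  assume a: "u \<noteq> s" "w \<noteq> s" "length p < card V" "\<forall>j<length p. adj E (p ! j) w \<longrightarrow> adj E (p ! j) u"
    "\<exists>j<length p. adj E (p ! j) u \<and> \<not> adj E (p ! j) w"
  show "lex_less (ldfs_label E s p w) (ldfs_label E s p u)"
    unfolding ldfs_label_eq[OF a(1)] ldfs_label_eq[OF a(2)]
    by (rule lex_less_sdom[OF sorted_rev_dec]) (use a(4,5) in auto)
qed

end



lemma hd_start:
  assumes "search_ordering V B \<sigma>" "s \<in> V" "\<And>u. u \<noteq> s \<Longrightarrow> B [] s u"
  shows "hd \<sigma> = s"
proof -
  have o: "distinct \<sigma>" "set \<sigma> = V" using assms(1) unfolding search_ordering_def ordering_def by auto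
  then have ne: "\<sigma> \<noteq> []" using assms(2) by auto
  then have l: "0 < length \<sigma>" by simp
  have "\<forall>u\<in>V - set (take 0 \<sigma>). \<not> B (take 0 \<sigma>) u (\<sigma> ! 0)"
    using assms(1) l unfolding search_ordering_def by blast
  then have "\<not> B [] s (\<sigma> ! 0)" using assms(2) by simp
  then have "\<sigma> ! 0 = s" using assms(3) by blast
  then show ?thesis using ne by (simp add: hd_conv_nth)
qed

theorem theorem4:
  fixes V :: "'a set" and E T :: "'a set set"
  assumes "connected_graph V E" and "split_graph V E" and "spanning_tree V E T"
  shows "((\<exists>\<sigma>. bfs_ordering V E \<sigma> \<and> F_tree E \<sigma> = T) \<longleftrightarrow> (\<exists>\<sigma>. mns_ordering V E \<sigma> \<and> F_tree E \<sigma> = T))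
       \<and> ((\<exists>\<sigma>. bfs_ordering V E \<sigma> \<and> F_tree E \<sigma> = T) \<longleftrightarrow> (\<exists>\<sigma>. mcs_ordering V E \<sigma> \<and> F_tree E \<sigma> = T))
       \<and> ((\<exists>\<sigma>. bfs_ordering V E \<sigma> \<and> F_tree E \<sigma> = T) \<longleftrightarrow> (\<exists>\<sigma>. lbfs_ordering V E \<sigma> \<and> F_tree E \<sigma> = T))
       \<and> ((\<exists>\<sigma>. bfs_ordering V E \<sigma> \<and> F_tree E \<sigma> = T) \<longleftrightarrow> (\<exists>\<sigma>. ldfs_ordering V E \<sigma> \<and> F_tree E \<sigma> = T))"
proof -
  obtain K I where KI: "K \<union> I = V" "K \<inter> I = {}" "clique E K" "independent E I"
    using assms(2) unfolding split_graph_def by blast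
  interpret sg V E K I
    by unfold_locales (use assms(1) KI in auto)
  have mns: "mns_ordering V E \<sigma> \<longleftrightarrow>
     (\<exists>s\<in>V. search_ordering V (\<lambda>p u w. mns_label E (card V) s p w \<subset> mns_label E (card V) s p u) \<sigma> \<and> hd \<sigma> = s)"
    for \<sigma>
  proof -
    have "hd \<sigma> = s" if "s \<in> V" "search_ordering V (\<lambda>p u w. mns_label E (card V) s p w \<subset> mns_label E (card V) s p u) \<sigma>" for s
      by (rule hd_start[OF that(2,1)]) (auto simp: mns_label_def)
    then show ?thesis unfolding mns_ordering_def by blast
  qed
  have lbfs: "lbfs_ordering V E \<sigma> \<longleftrightarrow>
     (\<exists>s\<in>V. search_ordering V (\<lambda>p u w. lex_less (lbfs_label E (card V) s p w) (lbfs_label E (card V) s p u)) \<sigma> \<and> hd \<sigma> = s)"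
    for \<sigma>
  proof -
    have "hd \<sigma> = s" if "s \<in> V" "search_ordering V (\<lambda>p u w. lex_less (lbfs_label E (card V) s p w) (lbfs_label E (card V) s p u)) \<sigma>" for s
      by (rule hd_start[OF that(2,1)]) (auto simp: lbfs_label_def lex_less_def)
    then show ?thesis unfolding lbfs_ordering_def by blast
  qed
  have ldfs: "ldfs_ordering V E \<sigma> \<longleftrightarrow>
     (\<exists>s\<in>V. search_ordering V (\<lambda>p u w. lex_less (ldfs_label E s p w) (ldfs_label E s p u)) \<sigma> \<and> hd \<sigma> = s)"
    for \<sigma>
  proof -
    have "hd \<sigma> = s" if "s \<in> V" "search_ordering V (\<lambda>p u w. lex_less (ldfs_label E s p w) (ldfs_label E s p u)) \<sigma>" for s
      by (rule hd_start[OF that(2,1)]) (auto simp: ldfs_label_def lex_less_def)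
    then show ?thesis unfolding ldfs_ordering_def by blast
  qed
  have mcs: "mcs_ordering V E \<sigma> \<longleftrightarrow>
     (\<exists>s\<in>V. search_ordering V (\<lambda>p u w. mcs_count E p w < mcs_count E p u) \<sigma> \<and> hd \<sigma> = s)"
    for \<sigma>
  proof
    assume m: "mcs_ordering V E \<sigma>"
    then have "ordering V \<sigma>" unfolding mcs_ordering_def search_ordering_def by simp
    then have "hd \<sigma> \<in> V" using ord_ne unfolding ordering_def by auto
    then show "\<exists>s\<in>V. search_ordering V (\<lambda>p u w. mcs_count E p w < mcs_count E p u) \<sigma> \<and> hd \<sigma> = s"
      using m unfolding mcs_ordering_def by blast
  qed (unfold mcs_ordering_def, blast)
  show ?thesis
    using srch.equiv[OF srch_mns, of T] srch.equiv[OF srch_mcs, of T]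
      srch.equiv[OF srch_lbfs, of T] srch.equiv[OF srch_ldfs, of T]
    unfolding mns mcs lbfs ldfs by blast
qed



end
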